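(* Let $\mathcal{D}\subset\mathbb{R}^N$ be open, bounded, connected, and let $y_0\in\partial\mathcal{D}$. Assume there exists $\theta_0<1$ such that for every $\delta>0$ there are $\hat\delta\in(0,\delta)$ and $\hat\epsilon\in(0,1)$ with the property: for all $\epsilon\in(0,\hat\epsilon)$ and all $x_0\in B_{\hat\delta}(y_0)\cap\mathcal{D}$, $$\mathbb{P}\big(\exists n\ge0:\ X_n^{\epsilon,x_0}\notin B_\delta(y_0)\big)\le\theta_0 .$$ Then $y_0$ is walk-regular.
   Context: Probability space: $\Omega_1=B_1(0)\subset\mathbb{R}^N$ with Borel $\sigma$-algebra and normalised Lebesgue measure; $(\Omega,\mathcal{F},\mathbb{P})$ is the countable product $\Omega=(\Omega_1)^{\mathbb{N}}$, $\omega=\{w_i\}_{i\ge1}$. The $\epsilon$-ball walk started at $x\in\mathcal{D}$: $X_0^{\epsilon,x}\equiv x$, $X_n^{\epsilon,x}=X_{n-1}^{\epsilon,x}+\big(\epsilon\wedge\operatorname{dist}(X_{n-1}^{\epsilon,x},\partial\mathcal{D})\big)w_n$ for $n\ge1$; it converges $\mathbb{P}$-a.s. to a random variable $X^{\epsilon,x}:\Omega\to\partial\mathcal{D}$. A point $y_0\in\partial\mathcal{D}$ is walk-regular if for every $\eta,\delta>0$ there exist $\hat\delta\in(0,\delta)$ and $\hat\epsilon\in(0,1)$ such that $\mathbb{P}(X^{\epsilon,x_0}\in B_\delta(y_0))\ge1-\eta$ for all $\epsilon\in(0,\hat\epsilon)$ and all $x_0\in B_{\hat\delta}(y_0)\cap\mathcal{D}$.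 *)

theory Defs
  imports "HOL-Probability.Probability"
begin

definition ball_step_measure :: "'a::euclidean_space measure" where
  "ball_step_measure = uniform_measure lborel (ball 0 1)"

text \<open>Countable product space; the coordinate w_i of the paper is \<omega> (i - 1).\<close>
definition walk_space :: "(nat \<Rightarrow> 'a::euclidean_space) measure" where
  "walk_space = PiM UNIV (\<lambda>_. ball_step_measure)"

primrec ball_walk :: "'a::euclidean_space set \<Rightarrow> real \<Rightarrow> 'a \<Rightarrow> (nat \<Rightarrow> 'a) \<Rightarrow> nat \<Rightarrow> 'a" where
  "ball_walk D eps x \<omega> 0 = x"
| "ball_walk D eps x \<omega> (Suc n) =
     ball_walk D eps x \<omega> n + min eps (infdist (ball_walk D eps x \<omega> n) (frontier D)) *\<^sub>R \<omega> n"

definition walk_limit :: "'a::euclidean_space set \<Rightarrow> real \<Rightarrow> 'a \<Rightarrow> (nat \<Rightarrow> 'a) \<Rightarrow> 'a" where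
  "walk_limit D eps x \<omega> = lim (ball_walk D eps x \<omega>)"

definition walk_regular :: "'a::euclidean_space set \<Rightarrow> 'a \<Rightarrow> bool" where
  "walk_regular D y0 \<longleftrightarrow> y0 \<in> frontier D \<and>
     (\<forall>\<eta>>0. \<forall>\<delta>>0. \<exists>\<delta>h\<in>{0<..<\<delta>}. \<exists>\<epsilon>h\<in>{0<..<1::real}.
        \<forall>\<epsilon>\<in>{0<..<\<epsilon>h}. \<forall>x0\<in>ball y0 \<delta>h \<inter> D.
          measure walk_space {\<omega>\<in>space walk_space. walk_limit D \<epsilon> x0 \<omega> \<in> ball y0 \<delta>} \<ge> 1 - \<eta>)"

end

theory Submission
  imports Defs
begin

lemma ball_emeasure_pos: "0 < emeasure lborel (ball (0::'a::euclidean_space) 1)"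
  by (subst emeasure_ball) auto

lemma prob_Mb: "prob_space (ball_step_measure :: 'a::euclidean_space measure)"
  unfolding ball_step_measure_def
  using ball_emeasure_pos[where 'a='a] emeasure_lborel_ball_finite[of "0::'a" 1]
  by (intro prob_space_uniform_measure) auto

lemma space_Mb[simp]: "space (ball_step_measure :: 'a::euclidean_space measure) = UNIV"
  unfolding ball_step_measure_def by simp

lemma sets_Mb[simp, measurable_cong]: "sets (ball_step_measure :: 'a::euclidean_space measure) = sets borel"
  unfolding ball_step_measure_def by simp

lemma AE_Mb: "AE w in (ball_step_measure :: 'a::euclidean_space measure). w \<in> ball 0 1"
  unfolding ball_step_measure_def
  by (rule AE_uniform_measureI) auto

lemma prob_P: "prob_space (walk_space :: (nat \<Rightarrow> 'a::euclidean_space) measure)"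
  unfolding walk_space_def by (intro prob_space_PiM prob_Mb)

lemma space_P[simp]: "space (walk_space :: (nat \<Rightarrow> 'a::euclidean_space) measure) = UNIV"
  unfolding walk_space_def by (simp add: space_PiM)

lemma AE_P: "AE \<omega> in (walk_space :: (nat \<Rightarrow> 'a::euclidean_space) measure). \<forall>n. \<omega> n \<in> ball 0 1"
  unfolding walk_space_def AE_all_countable
  by (intro allI AE_PiM_component prob_Mb AE_Mb) auto

lemma seqspace: "sequence_space (ball_step_measure :: 'a::euclidean_space measure)"
  unfolding sequence_space_def product_prob_space_def product_sigma_finite_def
    product_prob_space_axioms_def
  using prob_Mb by (auto intro: prob_space_imp_sigma_finite)

lemma comb_P: "distr (walk_space \<Otimes>\<^sub>M walk_space) walk_space (\<lambda>(\<omega>, \<omega>'). comb_seq i \<omega> \<omega>')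
   = (walk_space :: (nat \<Rightarrow> 'a::euclidean_space) measure)"
  unfolding walk_space_def by (rule sequence_space.PiM_comb_seq[OF seqspace])

lemma comp_P: "distr walk_space ball_step_measure (\<lambda>\<omega>. \<omega> i)
   = (ball_step_measure :: 'a::euclidean_space measure)"
  unfolding walk_space_def by (rule distr_PiM_component) (auto intro: prob_Mb)

lemma meas_comp[measurable]: "(\<lambda>\<omega>. \<omega> i) \<in> borel_measurable (walk_space :: (nat \<Rightarrow> 'a::euclidean_space) measure)"
proof -
  have "(\<lambda>\<omega>. \<omega> i) \<in> measurable (walk_space :: (nat \<Rightarrow> 'a) measure) ball_step_measure"
    unfolding walk_space_def by (rule measurable_component_singleton) simp
  moreover have "measurable (walk_space :: (nat \<Rightarrow> 'a) measure) ball_step_measure = measurable walk_space borel"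
    by (rule measurable_cong_sets) auto
  ultimately show ?thesis by metis
qed

lemma meas_walk[measurable (raw)]:
  fixes f :: "'b \<Rightarrow> 'a::euclidean_space"
  assumes [measurable]: "f \<in> borel_measurable N" "g \<in> measurable N walk_space"
  shows "(\<lambda>z. ball_walk D eps (f z) (g z) n) \<in> borel_measurable N"
proof (induction n)
  case 0 then show ?case by (simp add: assms)
next
  case (Suc n)
  have [measurable]: "(\<lambda>z. g z n) \<in> borel_measurable N"
    using measurable_compose[OF assms(2) meas_comp] .
  have [measurable]: "(\<lambda>x::'a. infdist x (frontier D)) \<in> borel_measurable borel"
    by (intro borel_measurable_continuous_onI continuous_intros)
  note Suc[measurable]
  show ?case unfolding ball_walk.simps by measurable
qed

lemma step_in_D:
  fixes y w :: "'a::euclidean_space"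
  assumes "y \<in> D" "w \<in> ball 0 1" "0 \<le> r" "r \<le> infdist y (frontier D)"
  shows "y + r *\<^sub>R w \<in> D"
proof (rule ccontr)
  assume nz: "y + r *\<^sub>R w \<notin> D"
  have "norm w < 1" using assms(2) by simp
  have "r \<noteq> 0" using nz assms(1) by auto
  then have rp: "r > 0" using assms(3) by simp
  have d: "dist y (y + r *\<^sub>R w) < infdist y (frontier D)"
  proof -
    have "dist y (y + r *\<^sub>R w) = r * norm w" using rp by (simp add: dist_norm)
    also have "\<dots> < r" using rp \<open>norm w < 1\<close> by simp
    finally show ?thesis using assms(4) by simp
  qed
  let ?B = "ball y (infdist y (frontier D))"
  have "0 < infdist y (frontier D)" using d zero_le_dist[of y "y + r *\<^sub>R w"] by linarith
  then have yB: "y \<in> ?B" by simp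
  have "?B \<inter> frontier D \<noteq> {}"
  proof (rule connected_Int_frontier)
    show "?B \<inter> D \<noteq> {}" using yB assms(1) by blast
    show "?B - D \<noteq> {}" using d nz by (auto simp: dist_commute)
  qed simp
  then obtain p where p: "p \<in> frontier D" "dist y p < infdist y (frontier D)" by auto
  then show False using infdist_le[OF p(1), of y] by simp
qed

lemma walk_in_D:
  assumes "x \<in> D" "\<forall>n. \<omega> n \<in> ball 0 1" "eps > 0"
  shows "ball_walk D eps x \<omega> n \<in> D"
proof (induction n)
  case 0 then show ?case using assms by simp
next
  case (Suc n)
  show ?case unfolding ball_walk.simps
    by (rule step_in_D[OF Suc]) (use assms infdist_nonneg in auto)
qed

lemma walk_step_norm:
  assumes "\<forall>n. \<omega> n \<in> ball 0 1" "eps > 0"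
  shows "dist (ball_walk D eps x \<omega> (Suc n)) (ball_walk D eps x \<omega> n) \<le> eps"
proof -
  let ?r = "min eps (infdist (ball_walk D eps x \<omega> n) (frontier D))"
  have "0 \<le> ?r" "?r \<le> eps" using assms infdist_nonneg by auto
  moreover have "norm (\<omega> n) \<le> 1" using assms(1) less_imp_le by auto
  ultimately have "?r * norm (\<omega> n) \<le> eps * 1" by (intro mult_mono) auto
  then show ?thesis using \<open>0 \<le> ?r\<close> by (simp add: dist_norm)
qed

lemma walk_nonantic:
  assumes "\<forall>i<n. \<omega> i = \<omega>' i"
  shows "ball_walk D eps x \<omega> n = ball_walk D eps x \<omega>' n"
  using assms by (induction n) auto

lemma walk_comb_le:
  assumes "j \<le> k"
  shows "ball_walk D eps x (comb_seq k \<omega> \<omega>') j = ball_walk D eps x \<omega> j"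
  using assms by (intro walk_nonantic) (auto simp: comb_seq_less)

lemma walk_comb_add:
  "ball_walk D eps x (comb_seq k \<omega> \<omega>') (k + n) = ball_walk D eps (ball_walk D eps x \<omega> k) \<omega>' n"
proof (induction n)
  case 0 then show ?case by (simp add: walk_comb_le)
next
  case (Suc n)
  have "comb_seq k \<omega> \<omega>' (k + n) = \<omega>' n" using comb_seq_add[of k \<omega> \<omega>' n] by (simp add: add.commute)
  then show ?case using Suc by simp
qed

lemma lborel_uminus: "distr lborel borel uminus = (lborel :: 'a::euclidean_space measure)"
proof -
  have "(lborel :: 'a measure) = density (distr lborel borel (\<lambda>x. 0 + (-1) *\<^sub>R x)) (\<lambda>_. ennreal (\<bar>-1::real\<bar>^DIM('a)))"
    by (rule lborel_affine) simp
  also have "\<dots> = distr lborel borel uminus"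
    by (simp add: density_1 one_ennreal_def[symmetric])
  finally show ?thesis by simp
qed

lemma nn_integral_lborel_uminus:
  fixes f :: "'a::euclidean_space \<Rightarrow> ennreal"
  assumes [measurable]: "f \<in> borel_measurable borel"
  shows "(\<integral>\<^sup>+x. f (- x) \<partial>lborel) = (\<integral>\<^sup>+x. f x \<partial>lborel)"
proof -
  have "(\<integral>\<^sup>+x. f x \<partial>lborel) = (\<integral>\<^sup>+x. f x \<partial>distr lborel borel uminus)"
    by (simp add: lborel_uminus)
  also have "\<dots> = (\<integral>\<^sup>+x. f (- x) \<partial>lborel)"
    by (subst nn_integral_distr) auto
  finally show ?thesis by simp
qed

lemma Mb_sym:
  fixes f :: "'a::euclidean_space \<Rightarrow> ennreal"
  assumes [measurable]: "f \<in> borel_measurable borel"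
  shows "(\<integral>\<^sup>+x. f (- x) \<partial>ball_step_measure) = (\<integral>\<^sup>+x. f x \<partial>ball_step_measure)"
proof -
  have i: "indicator (ball (0::'a) 1) (- x) = (indicator (ball 0 1) x :: ennreal)" for x
    by (simp add: indicator_def)
  have "(\<integral>\<^sup>+x. f (- x) * indicator (ball (0::'a) 1) x \<partial>lborel)
      = (\<integral>\<^sup>+x. (\<lambda>y. f y * indicator (ball (0::'a) 1) y) (- x) \<partial>lborel)"
    by (simp add: i)
  also have "\<dots> = (\<integral>\<^sup>+x. f x * indicator (ball (0::'a) 1) x \<partial>lborel)"
    by (rule nn_integral_lborel_uminus)
      (rule borel_measurable_times_ennreal[OF assms borel_measurable_indicator], simp)
  finally show ?thesis
    unfolding ball_step_measure_def
    by (subst (1 2) nn_integral_uniform_measure) auto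
qed

lemma parallelogram:
  fixes h v :: "'a::real_inner"
  shows "(norm (h + v))\<^sup>2 + (norm (h - v))\<^sup>2 = 2 * (norm h)\<^sup>2 + 2 * (norm v)\<^sup>2"
  by (simp add: power2_norm_eq_inner inner_add inner_diff algebra_simps)

lemma Mb_cont: "continuous_on UNIV f \<Longrightarrow> f \<in> borel_measurable (ball_step_measure :: 'a::euclidean_space measure)"
  using borel_measurable_continuous_onI[of f] measurable_cong_sets[OF sets_Mb[where 'a='a] refl, of borel]
  by metis

definition cM :: "'a::euclidean_space itself \<Rightarrow> ennreal" where
  "cM _ = (\<integral>\<^sup>+w. ennreal ((norm (w::'a))\<^sup>2) \<partial>ball_step_measure)"

lemma Mb_square:
  fixes h :: "'a::euclidean_space" and s :: real
  shows "(\<integral>\<^sup>+w. ennreal ((norm (h + s *\<^sub>R w))\<^sup>2) \<partial>ball_step_measure)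
     = ennreal ((norm h)\<^sup>2) + ennreal (s\<^sup>2) * cM TYPE('a)"
proof -
  interpret Mb: prob_space "ball_step_measure :: 'a measure" by (rule prob_Mb)
  have [measurable]: "(\<lambda>w. (norm (h + s *\<^sub>R w))\<^sup>2) \<in> borel_measurable (ball_step_measure :: 'a measure)"
    "(\<lambda>w. (norm (h - s *\<^sub>R w))\<^sup>2) \<in> borel_measurable (ball_step_measure :: 'a measure)"
    "(\<lambda>w. (norm w)\<^sup>2) \<in> borel_measurable (ball_step_measure :: 'a measure)"
    by (intro Mb_cont continuous_intros)+
  have e1: "emeasure (ball_step_measure :: 'a measure) UNIV = 1"
    using Mb.emeasure_space_1 by simp
  let ?I = "(\<integral>\<^sup>+w. ennreal ((norm (h + s *\<^sub>R w))\<^sup>2) \<partial>(ball_step_measure :: 'a measure))"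
  have sym: "(\<integral>\<^sup>+w. ennreal ((norm (h - s *\<^sub>R w))\<^sup>2) \<partial>(ball_step_measure :: 'a measure)) = ?I"
    using Mb_sym[of "\<lambda>w. ennreal ((norm (h + s *\<^sub>R w))\<^sup>2)"] by simp
  have "?I + ?I = (\<integral>\<^sup>+w. ennreal ((norm (h + s *\<^sub>R w))\<^sup>2) + ennreal ((norm (h - s *\<^sub>R w))\<^sup>2) \<partial>(ball_step_measure :: 'a measure))"
    by (subst nn_integral_add) (auto simp: sym)
  also have "\<dots> = (\<integral>\<^sup>+w. ennreal (2 * (norm h)\<^sup>2) + ennreal (2 * s\<^sup>2) * ennreal ((norm w)\<^sup>2) \<partial>(ball_step_measure :: 'a measure))"
  proof (rule nn_integral_cong)
    fix w :: 'a
    have "(norm (h + s *\<^sub>R w))\<^sup>2 + (norm (h - s *\<^sub>R w))\<^sup>2 = 2 * (norm h)\<^sup>2 + (2 * s\<^sup>2) * (norm w)\<^sup>2"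
      using parallelogram[of h "s *\<^sub>R w"] by (simp add: power_mult_distrib)
    then show "ennreal ((norm (h + s *\<^sub>R w))\<^sup>2) + ennreal ((norm (h - s *\<^sub>R w))\<^sup>2)
      = ennreal (2 * (norm h)\<^sup>2) + ennreal (2 * s\<^sup>2) * ennreal ((norm w)\<^sup>2)"
      by (simp add: ennreal_plus[symmetric] ennreal_mult[symmetric] del: ennreal_plus)
  qed
  also have "\<dots> = ennreal (2 * (norm h)\<^sup>2) + ennreal (2 * s\<^sup>2) * cM TYPE('a)"
    unfolding cM_def by (subst nn_integral_add) (auto simp: nn_integral_cmult e1)
  finally have eq: "?I + ?I = ennreal (2 * (norm h)\<^sup>2) + ennreal (2 * s\<^sup>2) * cM TYPE('a)" .
  have "2 * ?I = 2 * (ennreal ((norm h)\<^sup>2) + ennreal (s\<^sup>2) * cM TYPE('a))"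
  proof -
    have r: "ennreal (2 * (norm h)\<^sup>2) + ennreal (2 * s\<^sup>2) * cM TYPE('a)
        = 2 * (ennreal ((norm h)\<^sup>2) + ennreal (s\<^sup>2) * cM TYPE('a))"
      by (simp add: ennreal_mult distrib_left mult.assoc)
    have "2 * ?I = ?I + ?I" by (rule mult_2)
    then show ?thesis using eq r by simp
  qed
  then show ?thesis
    unfolding ennreal_mult_cancel_left by auto
qed

lemma meas_comp':
  "g \<in> measurable N (walk_space :: (nat \<Rightarrow> 'a::euclidean_space) measure) \<Longrightarrow> (\<lambda>z. g z i) \<in> borel_measurable N"
  using measurable_compose[OF _ meas_comp] by blast

lemma meas_combP[measurable]:
  "(\<lambda>(\<omega>, \<omega>'). comb_seq i \<omega> \<omega>') \<in> measurable (walk_space \<Otimes>\<^sub>M walk_space) (walk_space :: (nat \<Rightarrow> 'a::euclidean_space) measure)"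
  unfolding walk_space_def by (rule measurable_comb_seq)

lemma step_K:
  fixes h :: "(nat \<Rightarrow> 'a::euclidean_space) \<Rightarrow> 'a" and s :: "(nat \<Rightarrow> 'a) \<Rightarrow> real"
  assumes hm[measurable]: "h \<in> borel_measurable walk_space"
    and sm[measurable]: "s \<in> borel_measurable walk_space"
    and hn: "\<And>\<omega> \<omega>'. (\<forall>i<n. \<omega> i = \<omega>' i) \<Longrightarrow> h \<omega> = h \<omega>'"
    and sn: "\<And>\<omega> \<omega>'. (\<forall>i<n. \<omega> i = \<omega>' i) \<Longrightarrow> s \<omega> = s \<omega>'"
  shows "(\<integral>\<^sup>+\<omega>. ennreal ((norm (h \<omega> + s \<omega> *\<^sub>R \<omega> n))\<^sup>2) \<partial>walk_space)
    = (\<integral>\<^sup>+\<omega>. ennreal ((norm (h \<omega>))\<^sup>2) \<partial>walk_space) + cM TYPE('a) * (\<integral>\<^sup>+\<omega>. ennreal ((s \<omega>)\<^sup>2) \<partial>walk_space)"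
proof -
  interpret P: prob_space "walk_space :: (nat \<Rightarrow> 'a) measure" by (rule prob_P)
  let ?P = "walk_space :: (nat \<Rightarrow> 'a) measure"
  let ?F = "\<lambda>\<omega>. ennreal ((norm (h \<omega> + s \<omega> *\<^sub>R \<omega> n))\<^sup>2)"
  let ?G = "\<lambda>z. ennreal ((norm (h (fst z) + s (fst z) *\<^sub>R snd z 0))\<^sup>2)"
  have [measurable]: "(\<lambda>z. snd z 0) \<in> borel_measurable (?P \<Otimes>\<^sub>M ?P)"
    by (rule measurable_compose[OF measurable_snd meas_comp])
  have "(\<integral>\<^sup>+\<omega>. ?F \<omega> \<partial>?P) = (\<integral>\<^sup>+\<omega>. ?F \<omega> \<partial>distr (?P \<Otimes>\<^sub>M ?P) ?P (\<lambda>(\<omega>, \<omega>'). comb_seq n \<omega> \<omega>'))"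
    by (simp add: comb_P)
  also have "\<dots> = (\<integral>\<^sup>+z. ?F (case z of (\<omega>, \<omega>') \<Rightarrow> comb_seq n \<omega> \<omega>') \<partial>(?P \<Otimes>\<^sub>M ?P))"
    by (rule nn_integral_distr) measurable
  also have "\<dots> = (\<integral>\<^sup>+z. ?G z \<partial>(?P \<Otimes>\<^sub>M ?P))"
  proof (rule nn_integral_cong)
    fix z :: "(nat \<Rightarrow> 'a) \<times> (nat \<Rightarrow> 'a)"
    obtain \<omega> \<omega>' where z: "z = (\<omega>, \<omega>')" by (cases z)
    have "h (comb_seq n \<omega> \<omega>') = h \<omega>" by (rule hn) (simp add: comb_seq_less)
    moreover have "s (comb_seq n \<omega> \<omega>') = s \<omega>" by (rule sn) (simp add: comb_seq_less)
    moreover have "comb_seq n \<omega> \<omega>' n = \<omega>' 0" by (simp add: comb_seq_def)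
    ultimately show "?F (case z of (\<omega>, \<omega>') \<Rightarrow> comb_seq n \<omega> \<omega>') = ?G z" by (simp add: z)
  qed
  also have "\<dots> = (\<integral>\<^sup>+\<omega>. \<integral>\<^sup>+\<omega>'. ?G (\<omega>, \<omega>') \<partial>?P \<partial>?P)"
    by (rule P.nn_integral_fst[symmetric]) measurable
  also have "\<dots> = (\<integral>\<^sup>+\<omega>. ennreal ((norm (h \<omega>))\<^sup>2) + ennreal ((s \<omega>)\<^sup>2) * cM TYPE('a) \<partial>?P)"
  proof (rule nn_integral_cong)
    fix \<omega>
    have m1: "(\<lambda>\<omega>. \<omega> 0) \<in> ?P \<rightarrow>\<^sub>M ball_step_measure"
      unfolding walk_space_def by (rule measurable_component_singleton) simp
    have m2: "(\<lambda>w. ennreal ((norm (h \<omega> + s \<omega> *\<^sub>R w))\<^sup>2)) \<in> borel_measurable ball_step_measure"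
      by (intro measurable_compose[OF _ measurable_ennreal] Mb_cont continuous_intros)
    have "(\<integral>\<^sup>+\<omega>'. ?G (\<omega>, \<omega>') \<partial>?P) = (\<integral>\<^sup>+w. ennreal ((norm (h \<omega> + s \<omega> *\<^sub>R w))\<^sup>2) \<partial>distr ?P ball_step_measure (\<lambda>\<omega>. \<omega> 0))"
      using nn_integral_distr[OF m1, of "\<lambda>w. ennreal ((norm (h \<omega> + s \<omega> *\<^sub>R w))\<^sup>2)"] m2
      by (simp add: comp_P)
    also have "\<dots> = ennreal ((norm (h \<omega>))\<^sup>2) + ennreal ((s \<omega>)\<^sup>2) * cM TYPE('a)"
      by (simp add: comp_P Mb_square)
    finally show "(\<integral>\<^sup>+\<omega>'. ?G (\<omega>, \<omega>') \<partial>?P) = ennreal ((norm (h \<omega>))\<^sup>2) + ennreal ((s \<omega>)\<^sup>2) * cM TYPE('a)" .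
  qed
  also have "\<dots> = (\<integral>\<^sup>+\<omega>. ennreal ((norm (h \<omega>))\<^sup>2) \<partial>?P) + cM TYPE('a) * (\<integral>\<^sup>+\<omega>. ennreal ((s \<omega>)\<^sup>2) \<partial>?P)"
    by (subst nn_integral_add) (auto simp: nn_integral_cmult mult.commute)
  finally show ?thesis .
qed

primrec zproc :: "(nat \<Rightarrow> (nat \<Rightarrow> 'a) \<Rightarrow> real) \<Rightarrow> 'a \<Rightarrow> (nat \<Rightarrow> 'a) \<Rightarrow> nat \<Rightarrow> 'a::real_vector" where
  "zproc a z \<omega> 0 = z"
| "zproc a z \<omega> (Suc n) = zproc a z \<omega> n + a n \<omega> *\<^sub>R \<omega> n"

lemma zproc_meas:
  assumes "\<And>n. a n \<in> borel_measurable (walk_space :: (nat \<Rightarrow> 'a::euclidean_space) measure)"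
  shows "(\<lambda>\<omega>. zproc a z \<omega> N) \<in> borel_measurable (walk_space :: (nat \<Rightarrow> 'a) measure)"
proof (induction N)
  case 0 then show ?case by simp
next
  case (Suc N)
  note Suc[measurable] assms[measurable]
  show ?case by simp
qed

lemma zproc_nonantic:
  assumes "\<And>n \<omega> \<omega>'. (\<forall>i<n. \<omega> i = \<omega>' i) \<Longrightarrow> a n \<omega> = a n \<omega>'"
    and "\<forall>i<N. \<omega> i = \<omega>' i"
  shows "zproc a z \<omega> N = zproc a z \<omega>' N"
  using assms(2)
proof (induction N)
  case 0 then show ?case by simp
next
  case (Suc N)
  then have "zproc a z \<omega> N = zproc a z \<omega>' N" by simp
  moreover have "a N \<omega> = a N \<omega>'" using Suc.prems by (intro assms(1)) simp
  moreover have "\<omega> N = \<omega>' N" using Suc.prems by simp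
  ultimately show ?case by simp
qed

lemma zproc_L2:
  fixes a :: "nat \<Rightarrow> (nat \<Rightarrow> 'a::euclidean_space) \<Rightarrow> real"
  assumes am: "\<And>n. a n \<in> borel_measurable (walk_space :: (nat \<Rightarrow> 'a) measure)"
    and an: "\<And>n \<omega> \<omega>'. (\<forall>i<n. \<omega> i = \<omega>' i) \<Longrightarrow> a n \<omega> = a n \<omega>'"
  shows "(\<integral>\<^sup>+\<omega>. ennreal ((norm (zproc a z \<omega> N - z))\<^sup>2) \<partial>walk_space)
     = (\<Sum>n<N. cM TYPE('a) * (\<integral>\<^sup>+\<omega>. ennreal ((a n \<omega>)\<^sup>2) \<partial>walk_space))"
proof (induction N)
  case 0 then show ?case by simp
next
  case (Suc N)
  have zm[measurable]: "(\<lambda>\<omega>. zproc a z \<omega> N - z) \<in> borel_measurable (walk_space :: (nat \<Rightarrow> 'a) measure)"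
  proof -
    have [measurable]: "(\<lambda>\<omega>. zproc a z \<omega> N) \<in> borel_measurable (walk_space :: (nat \<Rightarrow> 'a) measure)"
      by (rule zproc_meas[OF am])
    show ?thesis by measurable
  qed
  have "(\<integral>\<^sup>+\<omega>. ennreal ((norm (zproc a z \<omega> (Suc N) - z))\<^sup>2) \<partial>walk_space)
     = (\<integral>\<^sup>+\<omega>. ennreal ((norm ((zproc a z \<omega> N - z) + a N \<omega> *\<^sub>R \<omega> N))\<^sup>2) \<partial>(walk_space :: (nat \<Rightarrow> 'a) measure))"
    by (simp add: algebra_simps)
  also have "\<dots> = (\<integral>\<^sup>+\<omega>. ennreal ((norm (zproc a z \<omega> N - z))\<^sup>2) \<partial>walk_space)
      + cM TYPE('a) * (\<integral>\<^sup>+\<omega>. ennreal ((a N \<omega>)\<^sup>2) \<partial>walk_space)"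
    by (rule step_K[OF zm am]) (auto intro: an zproc_nonantic[OF an])
  finally show ?case using Suc by simp
qed

definition acoef :: "'a::euclidean_space set \<Rightarrow> real \<Rightarrow> 'a \<Rightarrow> nat \<Rightarrow> (nat \<Rightarrow> 'a) \<Rightarrow> real" where
  "acoef D eps x n \<omega> = min eps (infdist (ball_walk D eps x \<omega> n) (frontier D))"

lemma walk_zproc: "ball_walk D eps x \<omega> n = zproc (acoef D eps x) x \<omega> n"
  by (induction n) (simp_all add: acoef_def)

lemma acoef_meas[measurable]: "acoef D eps x n \<in> borel_measurable (walk_space :: (nat \<Rightarrow> 'a::euclidean_space) measure)"
proof -
  have [measurable]: "(\<lambda>x::'a. infdist x (frontier D)) \<in> borel_measurable borel"
    by (intro borel_measurable_continuous_onI continuous_intros)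
  have [measurable]: "(\<lambda>\<omega>. ball_walk D eps x \<omega> n) \<in> borel_measurable (walk_space :: (nat \<Rightarrow> 'a) measure)"
    by (rule meas_walk[where f="\<lambda>_. x" and g="\<lambda>\<omega>. \<omega>", simplified]) simp
  show ?thesis unfolding acoef_def[abs_def] by measurable
qed

lemma walk_meas[measurable]: "(\<lambda>\<omega>. ball_walk D eps x \<omega> n) \<in> borel_measurable (walk_space :: (nat \<Rightarrow> 'a::euclidean_space) measure)"
  by (rule meas_walk[where f="\<lambda>_. x" and g="\<lambda>\<omega>. \<omega>", simplified]) simp

lemma acoef_nonantic: "\<forall>i<n. \<omega> i = \<omega>' i \<Longrightarrow> acoef D eps x n \<omega> = acoef D eps x n \<omega>'"
  unfolding acoef_def using walk_nonantic by metis

lemma acoef_nonneg: "eps > 0 \<Longrightarrow> 0 \<le> acoef D eps x n \<omega>"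
  unfolding acoef_def using infdist_nonneg by auto

lemma acoef_le: "acoef D eps x n \<omega> \<le> eps"
  unfolding acoef_def by auto

lemma stop_claim:
  fixes Y Z w :: "nat \<Rightarrow> 'a::real_normed_vector"
  assumes step: "\<And>n. Y (Suc n) = Y n + c n *\<^sub>R w n"
    and jj: "m \<le> jj" "jj \<le> N" "\<alpha> \<le> dist (Y jj) (Y m)" "\<forall>j. m \<le> j \<and> j < jj \<longrightarrow> dist (Y j) (Y m) < \<alpha>"
    and c'def: "\<And>n. c' n = (if m \<le> n \<and> (\<forall>j. m \<le> j \<and> j \<le> n \<longrightarrow> dist (Y j) (Y m) < \<alpha>) then c n else 0)"
    and Z: "Z 0 = z" "\<And>n. Z (Suc n) = Z n + c' n *\<^sub>R w n"
  shows "\<alpha> \<le> norm (Z N - z)"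
proof -
  have Z1: "n \<le> m \<Longrightarrow> Z n = z" for n
  proof (induction n)
    case 0 then show ?case using Z by simp
  next
    case (Suc n) then show ?case using Z c'def[of n] by simp
  qed
  have Z2: "m \<le> n \<Longrightarrow> n \<le> jj \<Longrightarrow> Z n = z + (Y n - Y m)" for n
  proof (induction n)
    case 0 then show ?case using Z by simp
  next
    case (Suc n)
    show ?case
    proof (cases "m = Suc n")
      case True then show ?thesis using Z1[of "Suc n"] by simp
    next
      case False
      then have mn: "m \<le> n" "n < jj" using Suc.prems by auto
      then have "c' n = c n" using c'def[of n] jj(4) by auto
      then show ?thesis using Suc.IH mn Z(2)[of n] step[of n] by (simp add: algebra_simps)
    qed
  qed
  have Z3: "jj \<le> n \<Longrightarrow> Z n = Z jj" for n
  proof (induction n)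
    case 0 then show ?case by simp
  next
    case (Suc n)
    show ?case
    proof (cases "jj = Suc n")
      case True then show ?thesis by simp
    next
      case False
      then have "jj \<le> n" using Suc.prems by auto
      then have "c' n = 0" using c'def[of n] jj(1,3) by force
      then show ?thesis using Suc.IH \<open>jj \<le> n\<close> Z(2)[of n] by simp
    qed
  qed
  have "Z N - z = Y jj - Y m" using Z3[OF jj(2)] Z2[OF jj(1) order.refl] by simp
  then show ?thesis using jj(3) by (simp add: dist_norm)
qed

lemma UNIV_sets_P[simp, measurable]: "UNIV \<in> sets (walk_space :: (nat \<Rightarrow> 'a::euclidean_space) measure)"
  using sets.top[of "walk_space :: (nat \<Rightarrow> 'a) measure"] by simp

abbreviation BB :: "'a::euclidean_space set \<Rightarrow> real \<Rightarrow> 'a \<Rightarrow> nat \<Rightarrow> ennreal" where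
  "BB D eps x n \<equiv> cM TYPE('a) * (\<integral>\<^sup>+\<omega>. ennreal ((acoef D eps x n \<omega>)\<^sup>2) \<partial>walk_space)"

lemma walk_L2:
  "(\<integral>\<^sup>+\<omega>. ennreal ((norm (ball_walk D eps x \<omega> N - x))\<^sup>2) \<partial>walk_space) = (\<Sum>n<N. BB D eps x n)"
  using zproc_L2[where a="acoef D eps x" and z=x and N=N, OF acoef_meas acoef_nonantic]
  by (simp add: walk_zproc)

lemma sumB_bound:
  fixes D :: "'a::euclidean_space set"
  assumes eps: "eps > 0" and xD: "x \<in> D" and bD: "bounded D"
  shows "\<exists>R\<ge>0. \<forall>N. (\<Sum>n<N. BB D eps x n) \<le> ennreal R"
proof -
  interpret P: prob_space "walk_space :: (nat \<Rightarrow> 'a) measure" by (rule prob_P)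
  obtain R0 where R0: "\<forall>y\<in>D. dist x y \<le> R0" using bD[unfolded bounded_any_center[of D x]] by blast
  define R where "R = max R0 1"
  have R: "R > 0" "D \<subseteq> cball x R" using R0 by (auto simp: R_def)
  have "(\<Sum>n<N. BB D eps x n) \<le> ennreal (R\<^sup>2)" for N
  proof -
    have "(\<Sum>n<N. BB D eps x n) = (\<integral>\<^sup>+\<omega>. ennreal ((norm (ball_walk D eps x \<omega> N - x))\<^sup>2) \<partial>walk_space)"
      by (rule walk_L2[symmetric])
    also have "\<dots> \<le> (\<integral>\<^sup>+\<omega>. ennreal (R\<^sup>2) \<partial>(walk_space :: (nat \<Rightarrow> 'a) measure))"
    proof (rule nn_integral_mono_AE)
      show "AE \<omega> in walk_space. ennreal ((norm (ball_walk D eps x \<omega> N - x))\<^sup>2) \<le> ennreal (R\<^sup>2)"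
        using AE_P
      proof eventually_elim
        case (elim \<omega>)
        then have "ball_walk D eps x \<omega> N \<in> D" using walk_in_D[OF xD _ eps] by blast
        then have "norm (ball_walk D eps x \<omega> N - x) \<le> R" using R by (auto simp: dist_norm norm_minus_commute)
        then have "(norm (ball_walk D eps x \<omega> N - x))\<^sup>2 \<le> R\<^sup>2" by (intro power_mono) auto
        then show ?case by (intro ennreal_leI)
      qed
    qed
    also have "\<dots> = ennreal (R\<^sup>2)" using P.emeasure_space_1 by simp
    finally show ?thesis .
  qed
  then show ?thesis by (intro exI[of _ "R\<^sup>2"]) auto
qed

lemma maxineq:
  fixes D :: "'a::euclidean_space set"
  assumes eps: "eps > 0" and \<alpha>: "\<alpha> > 0"
  shows "emeasure walk_space {\<omega>. \<exists>j. m \<le> j \<and> j \<le> N \<and> \<alpha> \<le> dist (ball_walk D eps x \<omega> j) (ball_walk D eps x \<omega> m)}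
    \<le> ennreal (1 / \<alpha>\<^sup>2) * (\<Sum>n\<in>{m..<N}. BB D eps x n)"
proof -
  let ?X = "\<lambda>\<omega> n. ball_walk D eps x \<omega> n"
  define a' where "a' n \<omega> = (if m \<le> n \<and> (\<forall>j. m \<le> j \<and> j \<le> n \<longrightarrow> dist (?X \<omega> j) (?X \<omega> m) < \<alpha>)
      then acoef D eps x n \<omega> else 0)" for n \<omega>
  have a'm: "a' n \<in> borel_measurable (walk_space :: (nat \<Rightarrow> 'a) measure)" for n
    unfolding a'_def by measurable
  have a'n: "a' n \<omega> = a' n \<omega>'" if "\<forall>i<n. \<omega> i = \<omega>' i" for n \<omega> \<omega>'
  proof (cases "m \<le> n")
    case True
    have e: "?X \<omega> j = ?X \<omega>' j" if "j \<le> n" for j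
      using that \<open>\<forall>i<n. \<omega> i = \<omega>' i\<close> by (intro walk_nonantic) auto
    have em: "?X \<omega> m = ?X \<omega>' m" using e True by simp
    have "acoef D eps x n \<omega> = acoef D eps x n \<omega>'" by (rule acoef_nonantic[OF that])
    then show ?thesis using True unfolding a'_def by (simp add: e em, blast)
  next
    case False then show ?thesis unfolding a'_def by simp
  qed
  let ?Z = "\<lambda>\<omega>. zproc a' x \<omega> N"
  have Zm[measurable]: "?Z \<in> borel_measurable (walk_space :: (nat \<Rightarrow> 'a) measure)"
    by (rule zproc_meas[OF a'm])
  have L2: "(\<integral>\<^sup>+\<omega>. ennreal ((norm (?Z \<omega> - x))\<^sup>2) \<partial>walk_space)
      = (\<Sum>n<N. cM TYPE('a) * (\<integral>\<^sup>+\<omega>. ennreal ((a' n \<omega>)\<^sup>2) \<partial>walk_space))"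
    by (rule zproc_L2[OF a'm a'n]) auto
  also have "\<dots> \<le> (\<Sum>n<N. if m \<le> n then BB D eps x n else 0)"
  proof (rule sum_mono)
    fix n
    have "(\<integral>\<^sup>+\<omega>. ennreal ((a' n \<omega>)\<^sup>2) \<partial>(walk_space :: (nat \<Rightarrow> 'a) measure))
        \<le> (\<integral>\<^sup>+\<omega>. (if m \<le> n then ennreal ((acoef D eps x n \<omega>)\<^sup>2) else 0) \<partial>walk_space)"
      by (intro nn_integral_mono) (auto simp: a'_def)
    then show "cM TYPE('a) * (\<integral>\<^sup>+\<omega>. ennreal ((a' n \<omega>)\<^sup>2) \<partial>walk_space) \<le> (if m \<le> n then BB D eps x n else 0)"
      by (cases "m \<le> n") (auto intro: mult_left_mono)
  qed
  also have "\<dots> = (\<Sum>n\<in>{m..<N}. BB D eps x n)"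
  proof -
    have "{n\<in>{..<N}. m \<le> n} = {m..<N}" by auto
    then show ?thesis using sum.inter_filter[of "{..<N}" "BB D eps x" "\<lambda>n. m \<le> n"] by simp
  qed
  finally have L2b: "(\<integral>\<^sup>+\<omega>. ennreal ((norm (?Z \<omega> - x))\<^sup>2) \<partial>walk_space) \<le> (\<Sum>n\<in>{m..<N}. BB D eps x n)" .
  have sub: "{\<omega>. \<exists>j. m \<le> j \<and> j \<le> N \<and> \<alpha> \<le> dist (?X \<omega> j) (?X \<omega> m)}
      \<subseteq> {\<omega> \<in> UNIV. 1 \<le> ennreal (1 / \<alpha>\<^sup>2) * ennreal ((norm (?Z \<omega> - x))\<^sup>2)}"
  proof safe
    fix \<omega> j assume j: "m \<le> j" "j \<le> N" "\<alpha> \<le> dist (?X \<omega> j) (?X \<omega> m)"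
    let ?Q = "\<lambda>j. m \<le> j \<and> j \<le> N \<and> \<alpha> \<le> dist (?X \<omega> j) (?X \<omega> m)"
    obtain j0 where j0: "?Q j0" "\<forall>i<j0. \<not> ?Q i" using j exists_least_iff[of ?Q] by blast
    have "\<alpha> \<le> norm (?Z \<omega> - x)"
    proof (rule stop_claim[where Y="?X \<omega>" and c="\<lambda>n. acoef D eps x n \<omega>" and w=\<omega> and m=m and jj=j0
          and c'="\<lambda>n. a' n \<omega>" and Z="\<lambda>n. zproc a' x \<omega> n"])
      show "\<forall>j. m \<le> j \<and> j < j0 \<longrightarrow> dist (?X \<omega> j) (?X \<omega> m) < \<alpha>"
        using j0 by force
    qed (use j0 in \<open>auto simp: acoef_def a'_def\<close>)
    then have "\<alpha>\<^sup>2 \<le> (norm (?Z \<omega> - x))\<^sup>2" using \<alpha> by (intro power_mono) auto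
    then have "1 \<le> (norm (?Z \<omega> - x))\<^sup>2 / \<alpha>\<^sup>2" using \<alpha> by simp
    then have "ennreal 1 \<le> ennreal ((norm (?Z \<omega> - x))\<^sup>2 / \<alpha>\<^sup>2)" by (rule ennreal_leI)
    moreover have "ennreal (1 / \<alpha>\<^sup>2) * ennreal ((norm (?Z \<omega> - x))\<^sup>2) = ennreal ((norm (?Z \<omega> - x))\<^sup>2 / \<alpha>\<^sup>2)"
      by (subst ennreal_mult''[symmetric]) auto
    ultimately show "1 \<le> ennreal (1 / \<alpha>\<^sup>2) * ennreal ((norm (?Z \<omega> - x))\<^sup>2)"
      by simp
  qed simp
  have "emeasure walk_space {\<omega>. \<exists>j. m \<le> j \<and> j \<le> N \<and> \<alpha> \<le> dist (?X \<omega> j) (?X \<omega> m)}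
      \<le> emeasure walk_space {\<omega> \<in> UNIV. 1 \<le> ennreal (1 / \<alpha>\<^sup>2) * ennreal ((norm (?Z \<omega> - x))\<^sup>2)}"
    by (rule emeasure_mono[OF sub]) measurable
  also have "\<dots> \<le> ennreal (1 / \<alpha>\<^sup>2) * (\<integral>\<^sup>+\<omega>\<in>UNIV. ennreal ((norm (?Z \<omega> - x))\<^sup>2) \<partial>walk_space)"
    by (rule nn_integral_Markov_inequality) auto
  also have "\<dots> \<le> ennreal (1 / \<alpha>\<^sup>2) * (\<Sum>n\<in>{m..<N}. BB D eps x n)"
    using L2b by (intro mult_left_mono) auto
  finally show ?thesis .
qed

lemma ennreal_zero_bound:
  fixes e :: ennreal
  assumes "\<And>m. e \<le> ennreal (f m)" "f \<longlonglongrightarrow> 0"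
  shows "e = 0"
proof -
  have "(\<lambda>m. ennreal (f m)) \<longlonglongrightarrow> ennreal 0" by (rule tendsto_ennrealI[OF assms(2)])
  then have "e \<le> ennreal 0" by (rule LIMSEQ_le_const) (use assms(1) in auto)
  then show ?thesis by simp
qed

lemma cauchy_from:
  fixes X :: "nat \<Rightarrow> 'a::metric_space"
  assumes "\<And>k. \<exists>m. \<forall>j\<ge>m. dist (X j) (X m) < 1 / real (Suc k)"
  shows "Cauchy X"
proof (rule metric_CauchyI)
  fix e :: real assume "0 < e"
  then obtain k where k: "inverse (real (Suc k)) < e / 2" using reals_Archimedean[of "e/2"] by auto
  obtain m where m: "\<forall>j\<ge>m. dist (X j) (X m) < 1 / real (Suc k)" using assms by blast
  have "dist (X p) (X q) < e" if "p \<ge> m" "q \<ge> m" for p q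
  proof -
    have "dist (X p) (X q) \<le> dist (X p) (X m) + dist (X q) (X m)" by (rule dist_triangle2)
    also have "\<dots> < 1 / real (Suc k) + 1 / real (Suc k)" using m that by (intro add_strict_mono) auto
    also have "\<dots> < e" using k by (simp add: field_simps)
    finally show ?thesis .
  qed
  then show "\<exists>M. \<forall>m\<ge>M. \<forall>n\<ge>M. dist (X m) (X n) < e" by blast
qed

lemma walk_conv:
  fixes D :: "'a::euclidean_space set"
  assumes eps: "eps > 0" and xD: "x \<in> D" and bD: "bounded D"
  shows "AE \<omega> in walk_space. convergent (\<lambda>n. ball_walk D eps x \<omega> n)"
proof -
  interpret P: prob_space "walk_space :: (nat \<Rightarrow> 'a) measure" by (rule prob_P)
  let ?X = "\<lambda>\<omega> n. ball_walk D eps x \<omega> n"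
  obtain R where R: "R \<ge> 0" "\<And>N. (\<Sum>n<N. BB D eps x n) \<le> ennreal R"
    using sumB_bound[OF eps xD bD] by blast
  have Bfin: "BB D eps x n \<noteq> \<top>" for n
  proof -
    have "BB D eps x n \<le> (\<Sum>i<Suc n. BB D eps x i)" by (rule member_le_sum) auto
    also have "\<dots> \<le> ennreal R" by (rule R(2))
    finally show ?thesis by (auto simp: top_unique)
  qed
  define b where "b n = enn2real (BB D eps x n)" for n
  have Bb: "BB D eps x n = ennreal (b n)" for n using Bfin[of n] by (simp add: b_def ennreal_enn2real_if)
  have b0: "0 \<le> b n" for n by (simp add: b_def)
  have bsum: "(\<Sum>n<N. b n) \<le> R" for N
  proof -
    have "ennreal (\<Sum>n<N. b n) = (\<Sum>n<N. BB D eps x n)" using b0 by (simp add: Bb)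
    then have "ennreal (\<Sum>n<N. b n) \<le> ennreal R" using R(2) by simp
    then show ?thesis using R(1) by (simp add: ennreal_le_iff)
  qed
  have bs: "summable b" by (rule summableI_nonneg_bounded[OF b0 bsum])
  define T where "T m = (\<Sum>k. b (k + m))" for m
  have T0: "T \<longlonglongrightarrow> 0" unfolding T_def by (rule suminf_exist_split2[OF bs])
  have Tnn: "0 \<le> T m" for m unfolding T_def
    using summable_ignore_initial_segment[OF bs, of m] b0 by (intro suminf_nonneg) auto
  have tail: "(\<Sum>n\<in>{m..<N}. b n) \<le> T m" for m N
  proof (cases "m \<le> N")
    case True
    have "(\<Sum>n\<in>{m..<N}. b n) = (\<Sum>n\<in>{0+m..<(N-m)+m}. b n)" using True by simp
    also have "\<dots> = (\<Sum>k\<in>{0..<N-m}. b (k + m))" by (rule sum.shift_bounds_nat_ivl)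
    also have "\<dots> \<le> T m" unfolding T_def
      using summable_ignore_initial_segment[OF bs, of m] b0 by (intro sum_le_suminf) auto
    finally show ?thesis .
  next
    case False then show ?thesis using Tnn by simp
  qed
  have setsQ: "{\<omega>. \<exists>j. m \<le> j \<and> j \<le> N \<and> \<alpha> \<le> dist (?X \<omega> j) (?X \<omega> m)} \<in> sets walk_space" for m N \<alpha>
  proof -
    have "{\<omega>. \<exists>j. m \<le> j \<and> j \<le> N \<and> \<alpha> \<le> dist (?X \<omega> j) (?X \<omega> m)}
      = {\<omega> \<in> space walk_space. \<exists>j. m \<le> j \<and> j \<le> N \<and> \<alpha> \<le> dist (?X \<omega> j) (?X \<omega> m)}" by simp
    also have "\<dots> \<in> sets walk_space" by measurable
    finally show ?thesis .
  qed
  have setsE: "{\<omega>. \<exists>j\<ge>m. \<alpha> \<le> dist (?X \<omega> j) (?X \<omega> m)} \<in> sets walk_space" for m \<alpha>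
  proof -
    have "{\<omega>. \<exists>j\<ge>m. \<alpha> \<le> dist (?X \<omega> j) (?X \<omega> m)}
      = {\<omega> \<in> space walk_space. \<exists>j\<ge>m. \<alpha> \<le> dist (?X \<omega> j) (?X \<omega> m)}" by simp
    also have "\<dots> \<in> sets walk_space" by measurable
    finally show ?thesis .
  qed
  have E: "emeasure walk_space {\<omega>. \<exists>j\<ge>m. \<alpha> \<le> dist (?X \<omega> j) (?X \<omega> m)} \<le> ennreal ((1 / \<alpha>\<^sup>2) * T m)"
    if "\<alpha> > 0" for \<alpha> m
  proof -
    let ?A = "\<lambda>N. {\<omega>. \<exists>j. m \<le> j \<and> j \<le> N \<and> \<alpha> \<le> dist (?X \<omega> j) (?X \<omega> m)}"
    have inc: "incseq ?A" by (auto simp: incseq_def)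
    have U: "{\<omega>. \<exists>j\<ge>m. \<alpha> \<le> dist (?X \<omega> j) (?X \<omega> m)} = (\<Union>N. ?A N)" by auto
    have "emeasure walk_space (\<Union>N. ?A N) = (SUP N. emeasure walk_space (?A N))"
      by (rule SUP_emeasure_incseq[symmetric]) (use setsQ inc in auto)
    also have "\<dots> \<le> ennreal ((1 / \<alpha>\<^sup>2) * T m)"
    proof (rule SUP_least)
      fix N
      have "emeasure walk_space (?A N) \<le> ennreal (1 / \<alpha>\<^sup>2) * (\<Sum>n\<in>{m..<N}. BB D eps x n)"
        by (rule maxineq[OF eps that])
      also have "\<dots> = ennreal (1 / \<alpha>\<^sup>2) * ennreal (\<Sum>n\<in>{m..<N}. b n)" using b0 by (simp add: Bb)
      also have "\<dots> \<le> ennreal (1 / \<alpha>\<^sup>2) * ennreal (T m)" using tail by (intro mult_left_mono ennreal_leI) auto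
      also have "\<dots> = ennreal ((1 / \<alpha>\<^sup>2) * T m)" using ennreal_mult''[OF Tnn[of m], of "1 / \<alpha>\<^sup>2"] by simp
      finally show "emeasure walk_space (?A N) \<le> ennreal ((1 / \<alpha>\<^sup>2) * T m)" .
    qed
    finally show ?thesis using U by simp
  qed
  define C where "C k = {\<omega>. \<forall>m. \<exists>j\<ge>m. 1 / real (Suc k) \<le> dist (?X \<omega> j) (?X \<omega> m)}" for k
  have Csets: "C k \<in> sets walk_space" for k
  proof -
    have "C k = {\<omega> \<in> space walk_space. \<forall>m. \<exists>j\<ge>m. 1 / real (Suc k) \<le> dist (?X \<omega> j) (?X \<omega> m)}"
      by (simp add: C_def)
    also have "\<dots> \<in> sets walk_space" by measurable
    finally show ?thesis .
  qed
  have Cnull: "C k \<in> null_sets walk_space" for k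
  proof (rule null_setsI[OF _ Csets])
    let ?\<alpha> = "1 / real (Suc k)"
    show "emeasure walk_space (C k) = 0"
    proof (rule ennreal_zero_bound)
      fix m
      have "emeasure walk_space (C k) \<le> emeasure walk_space {\<omega>. \<exists>j\<ge>m. ?\<alpha> \<le> dist (?X \<omega> j) (?X \<omega> m)}"
        by (rule emeasure_mono) (auto simp: C_def setsE)
      also have "\<dots> \<le> ennreal ((1 / ?\<alpha>\<^sup>2) * T m)" by (rule E) simp
      finally show "emeasure walk_space (C k) \<le> ennreal ((1 / ?\<alpha>\<^sup>2) * T m)" .
    next
      show "(\<lambda>m. (1 / (1 / real (Suc k))\<^sup>2) * T m) \<longlonglongrightarrow> 0"
        using tendsto_mult_right_zero[OF T0] T0 by simp
    qed
  qed
  have N0: "(\<Union>k. C k) \<in> null_sets walk_space" using Cnull by auto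
  show ?thesis
  proof (rule AE_I'[OF N0])
    show "{\<omega> \<in> space walk_space. \<not> convergent (?X \<omega>)} \<subseteq> (\<Union>k. C k)"
    proof
      fix \<omega> assume "\<omega> \<in> {\<omega> \<in> space walk_space. \<not> convergent (?X \<omega>)}"
      then have nc: "\<not> convergent (?X \<omega>)" by simp
      show "\<omega> \<in> (\<Union>k. C k)"
      proof (rule ccontr)
      assume nC: "\<omega> \<notin> (\<Union>k. C k)"
      have "Cauchy (?X \<omega>)"
      proof (rule cauchy_from)
        fix k
        from nC have "\<omega> \<notin> C k" by blast
        then show "\<exists>m. \<forall>j\<ge>m. dist (?X \<omega> j) (?X \<omega> m) < 1 / real (Suc k)"
          by (auto simp: C_def not_le not_less[symmetric])
      qed
      then show False using nc Cauchy_convergent_iff by blast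
      qed
    qed
  qed
qed

lemma ball_borel[measurable]: "ball (c::'a::euclidean_space) r \<in> sets borel"
  by simp

definition esc :: "'a::euclidean_space set \<Rightarrow> real \<Rightarrow> 'a \<Rightarrow> 'a \<Rightarrow> real \<Rightarrow> (nat \<Rightarrow> 'a) set" where
  "esc D eps y0 y \<rho> = {\<omega>. \<exists>n. ball_walk D eps y \<omega> n \<notin> ball y0 \<rho>}"

lemma esc_sets[measurable]: "esc D eps y0 y \<rho> \<in> sets (walk_space :: (nat \<Rightarrow> 'a::euclidean_space) measure)"
proof -
  have "esc D eps y0 y \<rho> = {\<omega> \<in> space walk_space. \<exists>n. ball_walk D eps y \<omega> n \<notin> ball y0 \<rho>}"
    by (simp add: esc_def)
  also have "\<dots> \<in> sets (walk_space :: (nat \<Rightarrow> 'a::euclidean_space) measure)" by measurable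
  finally show ?thesis .
qed

lemma markov_step:
  fixes D :: "'a::euclidean_space set" and y0 :: 'a and \<theta> :: ennreal
  assumes eps: "eps > 0" and xD: "x \<in> D" and xb: "x \<in> ball y0 \<rho>'" and \<rho>: "\<rho>' \<le> \<rho>"
    and H: "\<And>y. y \<in> D \<Longrightarrow> y \<in> ball y0 (\<rho>' + eps) \<Longrightarrow> emeasure walk_space (esc D eps y0 y \<rho>) \<le> \<theta>"
  shows "emeasure walk_space (esc D eps y0 x \<rho>) \<le> \<theta> * emeasure walk_space (esc D eps y0 x \<rho>')"
proof -
  interpret P: prob_space "walk_space :: (nat \<Rightarrow> 'a) measure" by (rule prob_P)
  let ?P = "walk_space :: (nat \<Rightarrow> 'a) measure"
  let ?X = "\<lambda>\<omega> n. ball_walk D eps x \<omega> n"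
  define A where "A k = {\<omega>. (\<forall>j<k. ?X \<omega> j \<in> ball y0 \<rho>') \<and> ?X \<omega> k \<notin> ball y0 \<rho>'}" for k
  have Asets[measurable]: "A k \<in> sets ?P" for k
  proof -
    have "A k = {\<omega> \<in> space ?P. (\<forall>j<k. ?X \<omega> j \<in> ball y0 \<rho>') \<and> ?X \<omega> k \<notin> ball y0 \<rho>'}"
      by (simp add: A_def)
    also have "\<dots> \<in> sets ?P" by measurable
    finally show ?thesis .
  qed
  have disj: "disjoint_family A"
    unfolding disjoint_family_on_def A_def
    by (auto, metis linorder_neqE_nat)
  have escU: "esc D eps y0 x \<rho>' = (\<Union>k. A k)"
  proof
    show "esc D eps y0 x \<rho>' \<subseteq> (\<Union>k. A k)"
    proof
      fix \<omega> assume "\<omega> \<in> esc D eps y0 x \<rho>'"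
      then obtain n where "?X \<omega> n \<notin> ball y0 \<rho>'" by (auto simp: esc_def)
      then obtain k where "?X \<omega> k \<notin> ball y0 \<rho>'" "\<forall>j<k. \<not> ?X \<omega> j \<notin> ball y0 \<rho>'"
        using exists_least_iff[of "\<lambda>n. ?X \<omega> n \<notin> ball y0 \<rho>'"] by blast
      then show "\<omega> \<in> (\<Union>k. A k)" by (auto simp: A_def)
    qed
    show "(\<Union>k. A k) \<subseteq> esc D eps y0 x \<rho>'" by (auto simp: A_def esc_def)
  qed
  have sub: "esc D eps y0 x \<rho> \<subseteq> esc D eps y0 x \<rho>'"
  proof
    fix \<omega> assume "\<omega> \<in> esc D eps y0 x \<rho>"
    then obtain n where "?X \<omega> n \<notin> ball y0 \<rho>" by (auto simp: esc_def)
    then have "?X \<omega> n \<notin> ball y0 \<rho>'" using \<rho> by auto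
    then show "\<omega> \<in> esc D eps y0 x \<rho>'" by (auto simp: esc_def)
  qed
  have escU2: "esc D eps y0 x \<rho> = (\<Union>k. A k \<inter> esc D eps y0 x \<rho>)"
    using sub escU by blast
  have core: "emeasure ?P (A k \<inter> esc D eps y0 x \<rho>) \<le> \<theta> * emeasure ?P (A k)" for k
  proof -
    let ?S = "A k \<inter> esc D eps y0 x \<rho>"
    let ?Q = "{z \<in> space (?P \<Otimes>\<^sub>M ?P). fst z \<in> A k \<and> (\<exists>n. ball_walk D eps (?X (fst z) k) (snd z) n \<notin> ball y0 \<rho>)}"
    have Qsets: "?Q \<in> sets (?P \<Otimes>\<^sub>M ?P)" by measurable
    have pre: "(\<lambda>(\<omega>, \<omega>'). comb_seq k \<omega> \<omega>') -` ?S \<inter> space (?P \<Otimes>\<^sub>M ?P) = ?Q"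
    proof -
      have iff: "comb_seq k \<omega> \<omega>' \<in> ?S \<longleftrightarrow> \<omega> \<in> A k \<and> (\<exists>n. ball_walk D eps (?X \<omega> k) \<omega>' n \<notin> ball y0 \<rho>)"
        for \<omega> \<omega>'
      proof
        assume "comb_seq k \<omega> \<omega>' \<in> ?S"
        then have inA: "comb_seq k \<omega> \<omega>' \<in> A k" and inE: "comb_seq k \<omega> \<omega>' \<in> esc D eps y0 x \<rho>" by auto
        from inA have \<omega>A: "\<omega> \<in> A k" by (auto simp: A_def walk_comb_le)
        from inE obtain n where n: "ball_walk D eps x (comb_seq k \<omega> \<omega>') n \<notin> ball y0 \<rho>" by (auto simp: esc_def)
        have "\<not> n < k"
        proof
          assume "n < k"
          then have "ball_walk D eps x (comb_seq k \<omega> \<omega>') n \<in> ball y0 \<rho>'" using inA by (auto simp: A_def)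
          then show False using n \<rho> by auto
        qed
        then obtain n' where "n = k + n'" using le_Suc_ex not_less by blast
        then show "\<omega> \<in> A k \<and> (\<exists>n. ball_walk D eps (?X \<omega> k) \<omega>' n \<notin> ball y0 \<rho>)"
          using n \<omega>A by (auto simp: walk_comb_add)
      next
        assume r: "\<omega> \<in> A k \<and> (\<exists>n. ball_walk D eps (?X \<omega> k) \<omega>' n \<notin> ball y0 \<rho>)"
        then obtain n where n: "ball_walk D eps (?X \<omega> k) \<omega>' n \<notin> ball y0 \<rho>" by blast
        have "comb_seq k \<omega> \<omega>' \<in> A k" using r by (auto simp: A_def walk_comb_le)
        moreover have "ball_walk D eps x (comb_seq k \<omega> \<omega>') (k + n) \<notin> ball y0 \<rho>"
          using n by (simp add: walk_comb_add)
        then have "comb_seq k \<omega> \<omega>' \<in> esc D eps y0 x \<rho>" by (auto simp: esc_def)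
        ultimately show "comb_seq k \<omega> \<omega>' \<in> ?S" by blast
      qed
      show ?thesis
      proof (rule set_eqI)
        fix z :: "(nat \<Rightarrow> 'a) \<times> (nat \<Rightarrow> 'a)"
        obtain \<omega> \<omega>' where z: "z = (\<omega>, \<omega>')" by (cases z)
        show "z \<in> (\<lambda>(\<omega>, \<omega>'). comb_seq k \<omega> \<omega>') -` ?S \<inter> space (?P \<Otimes>\<^sub>M ?P) \<longleftrightarrow> z \<in> ?Q"
          unfolding z using iff[of \<omega> \<omega>'] by (simp add: space_pair_measure)
      qed
    qed
    have "emeasure ?P ?S = emeasure (distr (?P \<Otimes>\<^sub>M ?P) ?P (\<lambda>(\<omega>, \<omega>'). comb_seq k \<omega> \<omega>')) ?S"
      by (simp add: comb_P)
    also have "\<dots> = emeasure (?P \<Otimes>\<^sub>M ?P) ((\<lambda>(\<omega>, \<omega>'). comb_seq k \<omega> \<omega>') -` ?S \<inter> space (?P \<Otimes>\<^sub>M ?P))"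
      by (rule emeasure_distr[OF meas_combP]) (intro sets.Int Asets esc_sets)
    also have "\<dots> = emeasure (?P \<Otimes>\<^sub>M ?P) ?Q"
      by (simp only: pre)
    also have "\<dots> = (\<integral>\<^sup>+\<omega>. emeasure ?P (Pair \<omega> -` ?Q) \<partial>?P)"
      by (rule P.emeasure_pair_measure_alt[OF Qsets])
    also have "\<dots> = (\<integral>\<^sup>+\<omega>. indicator (A k) \<omega> * emeasure ?P (esc D eps y0 (?X \<omega> k) \<rho>) \<partial>?P)"
    proof (rule nn_integral_cong)
      fix \<omega>
      show "emeasure ?P (Pair \<omega> -` ?Q) = indicator (A k) \<omega> * emeasure ?P (esc D eps y0 (?X \<omega> k) \<rho>)"
      proof (cases "\<omega> \<in> A k")
        case True
        then have "Pair \<omega> -` ?Q = esc D eps y0 (?X \<omega> k) \<rho>"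
          by (auto simp: esc_def space_pair_measure)
        then show ?thesis using True by simp
      next
        case False
        then have "Pair \<omega> -` ?Q = {}" by auto
        then show ?thesis using False by simp
      qed
    qed
    also have "\<dots> \<le> (\<integral>\<^sup>+\<omega>. \<theta> * indicator (A k) \<omega> \<partial>?P)"
    proof (rule nn_integral_mono_AE)
      show "AE \<omega> in ?P. indicator (A k) \<omega> * emeasure ?P (esc D eps y0 (?X \<omega> k) \<rho>) \<le> \<theta> * indicator (A k) \<omega>"
        using AE_P
      proof eventually_elim
        case (elim \<omega>)
        show ?case
        proof (cases "\<omega> \<in> A k")
          case True
          have inD: "?X \<omega> k \<in> D" using walk_in_D[OF xD _ eps] elim by blast
          have inB: "?X \<omega> k \<in> ball y0 (\<rho>' + eps)"
          proof (cases k)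
            case 0 then show ?thesis using xb eps by simp
          next
            case (Suc j)
            then have "?X \<omega> j \<in> ball y0 \<rho>'" using True by (auto simp: A_def)
            moreover have "dist (?X \<omega> k) (?X \<omega> j) \<le> eps" using walk_step_norm[OF elim eps] Suc by simp
            ultimately show ?thesis
              using dist_triangle[of y0 "?X \<omega> k" "?X \<omega> j"] by (simp add: dist_commute)
          qed
          show ?thesis using H[OF inD inB] True by (simp add: mult.commute)
        next
          case False then show ?thesis by simp
        qed
      qed
    qed
    also have "\<dots> = \<theta> * emeasure ?P (A k)" by (rule nn_integral_cmult_indicator) simp
    finally show ?thesis .
  qed
  have "emeasure ?P (esc D eps y0 x \<rho>) = emeasure ?P (\<Union>k. A k \<inter> esc D eps y0 x \<rho>)"
    using escU2 by simp
  also have "\<dots> = (\<Sum>k. emeasure ?P (A k \<inter> esc D eps y0 x \<rho>))"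
    by (rule suminf_emeasure[symmetric]) (use disj in \<open>auto simp: disjoint_family_on_def\<close>)
  also have "\<dots> \<le> (\<Sum>k. \<theta> * emeasure ?P (A k))"
    by (intro suminf_le core) auto
  also have "\<dots> = \<theta> * (\<Sum>k. emeasure ?P (A k))" by simp
  also have "(\<Sum>k. emeasure ?P (A k)) = emeasure ?P (esc D eps y0 x \<rho>')"
  proof -
    have "range A \<subseteq> sets ?P" using Asets by auto
    then show ?thesis using escU suminf_emeasure[of A ?P] disj by simp
  qed
  finally show ?thesis .
qed

lemma iterate:
  fixes D :: "'a::euclidean_space set" and y0 :: 'a and \<theta> :: real
  assumes \<theta>0: "0 \<le> \<theta>"
    and H: "\<forall>\<delta>>0. \<exists>\<delta>h\<in>{0<..<\<delta>}. \<exists>\<epsilon>h\<in>{0<..<1::real}. \<forall>\<epsilon>\<in>{0<..<\<epsilon>h}. \<forall>x0\<in>ball y0 \<delta>h \<inter> D.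
               emeasure walk_space (esc D \<epsilon> y0 x0 \<delta>) \<le> ennreal \<theta>"
  shows "\<forall>\<rho>>0. \<exists>r\<in>{0<..<\<rho>}. \<exists>e\<in>{0<..<1::real}. \<forall>\<epsilon>\<in>{0<..<e}. \<forall>x0\<in>ball y0 r \<inter> D.
               emeasure walk_space (esc D \<epsilon> y0 x0 \<rho>) \<le> ennreal (\<theta> ^ Suc k)"
proof (induction k)
  case 0 then show ?case using H by simp
next
  case (Suc k)
  show ?case
  proof (intro allI impI)
    fix \<rho> :: real assume \<rho>: "\<rho> > 0"
    obtain \<delta>h \<epsilon>h where dh: "\<delta>h \<in> {0<..<\<rho>}" and eh: "\<epsilon>h \<in> {0<..<1::real}"
      and Hr: "\<forall>\<epsilon>\<in>{0<..<\<epsilon>h}. \<forall>x0\<in>ball y0 \<delta>h \<inter> D. emeasure walk_space (esc D \<epsilon> y0 x0 \<rho>) \<le> ennreal \<theta>"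
      using H \<rho> by blast
    have "\<delta>h / 2 > 0" using dh by simp
    then obtain r e where r: "r \<in> {0<..<\<delta>h / 2}" and e: "e \<in> {0<..<1::real}"
      and IH: "\<forall>\<epsilon>\<in>{0<..<e}. \<forall>x0\<in>ball y0 r \<inter> D. emeasure walk_space (esc D \<epsilon> y0 x0 (\<delta>h / 2)) \<le> ennreal (\<theta> ^ Suc k)"
      using Suc.IH by blast
    define e' where "e' = min e (min \<epsilon>h (\<delta>h / 2))"
    have e': "e' \<in> {0<..<1::real}" using e eh dh by (auto simp: e'_def)
    have r': "r \<in> {0<..<\<rho>}" using r dh by auto
    have "\<forall>\<epsilon>\<in>{0<..<e'}. \<forall>x0\<in>ball y0 r \<inter> D. emeasure walk_space (esc D \<epsilon> y0 x0 \<rho>) \<le> ennreal (\<theta> ^ Suc (Suc k))"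
    proof (intro ballI)
      fix \<epsilon> x0 assume \<epsilon>: "\<epsilon> \<in> {0<..<e'}" and x0: "x0 \<in> ball y0 r \<inter> D"
      have "emeasure walk_space (esc D \<epsilon> y0 x0 \<rho>) \<le> ennreal \<theta> * emeasure walk_space (esc D \<epsilon> y0 x0 (\<delta>h / 2))"
      proof (rule markov_step)
        show "\<epsilon> > 0" using \<epsilon> by simp
        show "x0 \<in> D" using x0 by simp
        show "x0 \<in> ball y0 (\<delta>h / 2)" using x0 r by auto
        show "\<delta>h / 2 \<le> \<rho>" using dh by simp
        fix y assume "y \<in> D" "y \<in> ball y0 (\<delta>h / 2 + \<epsilon>)"
        moreover have "\<epsilon> < \<delta>h / 2" "\<epsilon> < \<epsilon>h" using \<epsilon> by (auto simp: e'_def)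
        ultimately have "y \<in> ball y0 \<delta>h \<inter> D" "\<epsilon> \<in> {0<..<\<epsilon>h}" using \<epsilon> by auto
        then show "emeasure walk_space (esc D \<epsilon> y0 y \<rho>) \<le> ennreal \<theta>" using Hr by blast
      qed
      also have "\<dots> \<le> ennreal \<theta> * ennreal (\<theta> ^ Suc k)"
        using IH \<epsilon> x0 by (intro mult_left_mono) (auto simp: e'_def)
      also have "\<dots> = ennreal (\<theta> ^ Suc (Suc k))" using \<theta>0 by (simp add: ennreal_mult[symmetric])
      finally show "emeasure walk_space (esc D \<epsilon> y0 x0 \<rho>) \<le> ennreal (\<theta> ^ Suc (Suc k))" .
    qed
    then show "\<exists>r\<in>{0<..<\<rho>}. \<exists>e\<in>{0<..<1::real}. \<forall>\<epsilon>\<in>{0<..<e}. \<forall>x0\<in>ball y0 r \<inter> D.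
               emeasure walk_space (esc D \<epsilon> y0 x0 \<rho>) \<le> ennreal (\<theta> ^ Suc (Suc k))"
      using r' e' by blast
  qed
qed

lemma limit_meas[measurable]:
  "(\<lambda>\<omega>. walk_limit D eps x \<omega>) \<in> borel_measurable (walk_space :: (nat \<Rightarrow> 'a::euclidean_space) measure)"
proof -
  have "(\<lambda>\<omega>. lim (\<lambda>i. ball_walk D eps x \<omega> i)) \<in> borel_measurable (walk_space :: (nat \<Rightarrow> 'a) measure)"
    by (rule borel_measurable_lim_metric) (rule walk_meas)
  then show ?thesis unfolding walk_limit_def by (simp add: eta_contract_eq)
qed

theorem lemma2p18:
  fixes D :: "'a::euclidean_space set" and y0 :: 'a
  assumes "open D" and "bounded D" and "connected D"
    and "y0 \<in> frontier D"
    and "\<exists>\<theta>0<(1::real). \<forall>\<delta>>0. \<exists>\<delta>h\<in>{0<..<\<delta>}. \<exists>\<epsilon>h\<in>{0<..<1::real}.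
           \<forall>\<epsilon>\<in>{0<..<\<epsilon>h}. \<forall>x0\<in>ball y0 \<delta>h \<inter> D.
             measure walk_space {\<omega>\<in>space walk_space. \<exists>n. ball_walk D \<epsilon> x0 \<omega> n \<notin> ball y0 \<delta>} \<le> \<theta>0"
  shows "walk_regular D y0"
proof -
  interpret P: prob_space "walk_space :: (nat \<Rightarrow> 'a) measure" by (rule prob_P)
  obtain \<theta>0 where \<theta>0: "\<theta>0 < 1" and H0: "\<forall>\<delta>>0. \<exists>\<delta>h\<in>{0<..<\<delta>}. \<exists>\<epsilon>h\<in>{0<..<1::real}.
           \<forall>\<epsilon>\<in>{0<..<\<epsilon>h}. \<forall>x0\<in>ball y0 \<delta>h \<inter> D.
             measure walk_space {\<omega>\<in>space walk_space. \<exists>n. ball_walk D \<epsilon> x0 \<omega> n \<notin> ball y0 \<delta>} \<le> \<theta>0"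
    using assms(5) by blast
  define \<theta> where "\<theta> = max \<theta>0 0"
  have \<theta>: "0 \<le> \<theta>" "\<theta> < 1" using \<theta>0 by (auto simp: \<theta>_def)
  have escm: "{\<omega>\<in>space walk_space. \<exists>n. ball_walk D \<epsilon> x0 \<omega> n \<notin> ball y0 \<delta>} = esc D \<epsilon> y0 x0 \<delta>"
    for \<epsilon> x0 \<delta> by (simp add: esc_def)
  have H: "\<forall>\<delta>>0. \<exists>\<delta>h\<in>{0<..<\<delta>}. \<exists>\<epsilon>h\<in>{0<..<1::real}. \<forall>\<epsilon>\<in>{0<..<\<epsilon>h}. \<forall>x0\<in>ball y0 \<delta>h \<inter> D.
               emeasure walk_space (esc D \<epsilon> y0 x0 \<delta>) \<le> ennreal \<theta>"
  proof (intro allI impI)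
    fix \<delta> :: real assume "\<delta> > 0"
    then obtain \<delta>h \<epsilon>h where "\<delta>h \<in> {0<..<\<delta>}" "\<epsilon>h \<in> {0<..<1::real}"
      and h: "\<forall>\<epsilon>\<in>{0<..<\<epsilon>h}. \<forall>x0\<in>ball y0 \<delta>h \<inter> D. measure walk_space (esc D \<epsilon> y0 x0 \<delta>) \<le> \<theta>0"
      using H0 unfolding escm by blast
    moreover have "\<forall>\<epsilon>\<in>{0<..<\<epsilon>h}. \<forall>x0\<in>ball y0 \<delta>h \<inter> D. emeasure walk_space (esc D \<epsilon> y0 x0 \<delta>) \<le> ennreal \<theta>"
    proof (intro ballI)
      fix \<epsilon> x0 assume "\<epsilon> \<in> {0<..<\<epsilon>h}" "x0 \<in> ball y0 \<delta>h \<inter> D"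
      then have "measure walk_space (esc D \<epsilon> y0 x0 \<delta>) \<le> \<theta>0" using h by blast
      then have "measure walk_space (esc D \<epsilon> y0 x0 \<delta>) \<le> \<theta>" unfolding \<theta>_def by linarith
      then show "emeasure walk_space (esc D \<epsilon> y0 x0 \<delta>) \<le> ennreal \<theta>"
        by (simp add: P.emeasure_eq_measure ennreal_leI)
    qed
    ultimately show "\<exists>\<delta>h\<in>{0<..<\<delta>}. \<exists>\<epsilon>h\<in>{0<..<1::real}. \<forall>\<epsilon>\<in>{0<..<\<epsilon>h}. \<forall>x0\<in>ball y0 \<delta>h \<inter> D.
               emeasure walk_space (esc D \<epsilon> y0 x0 \<delta>) \<le> ennreal \<theta>" by blast
  qed
  show ?thesis
    unfolding walk_regular_def
  proof (intro conjI allI impI)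
    show "y0 \<in> frontier D" by (rule assms(4))
    fix \<eta> \<delta> :: real assume \<eta>: "\<eta> > 0" and \<delta>: "\<delta> > 0"
    have "(\<lambda>n. \<theta> ^ n) \<longlonglongrightarrow> 0" using \<theta> by (intro LIMSEQ_realpow_zero)
    then obtain no where no: "\<forall>n\<ge>no. norm (\<theta> ^ n - 0) < \<eta>" using LIMSEQ_D \<eta> by blast
    define k where "k = no"
    have k: "\<theta> ^ k < \<eta>" using no by (auto simp: k_def real_norm_def abs_less_iff)
    have kk: "\<theta> ^ Suc k \<le> \<eta>"
    proof -
      have "\<theta> ^ Suc k \<le> \<theta> ^ k" using \<theta> by (simp add: mult_left_le_one_le)
      then show ?thesis using k by simp
    qed
    have "\<delta> / 2 > 0" using \<delta> by simp
    then obtain r e where r: "r \<in> {0<..<\<delta> / 2}" and e: "e \<in> {0<..<1::real}"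
      and bnd: "\<forall>\<epsilon>\<in>{0<..<e}. \<forall>x0\<in>ball y0 r \<inter> D. emeasure walk_space (esc D \<epsilon> y0 x0 (\<delta> / 2)) \<le> ennreal (\<theta> ^ Suc k)"
      using iterate[OF \<theta>(1) H, of k] by blast
    have "\<forall>\<epsilon>\<in>{0<..<e}. \<forall>x0\<in>ball y0 r \<inter> D.
        1 - \<eta> \<le> measure walk_space {\<omega> \<in> space walk_space. walk_limit D \<epsilon> x0 \<omega> \<in> ball y0 \<delta>}"
    proof (intro ballI)
      fix \<epsilon> x0 assume \<epsilon>: "\<epsilon> \<in> {0<..<e}" and x0: "x0 \<in> ball y0 r \<inter> D"
      let ?E = "esc D \<epsilon> y0 x0 (\<delta> / 2)"
      let ?T = "{\<omega> \<in> space walk_space. walk_limit D \<epsilon> x0 \<omega> \<in> ball y0 \<delta>}"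
      have "emeasure walk_space ?E \<le> ennreal \<eta>" using bnd \<epsilon> x0 kk order.trans ennreal_leI by blast
      then have mE: "measure walk_space ?E \<le> \<eta>" using \<eta> by (simp add: P.emeasure_eq_measure)
      have Tsets: "?T \<in> sets walk_space" by measurable
      have conv: "AE \<omega> in walk_space. convergent (\<lambda>n. ball_walk D \<epsilon> x0 \<omega> n)"
        using walk_conv[of \<epsilon> x0 D] \<epsilon> x0 assms(2) by auto
      have "AE \<omega> in walk_space. \<omega> \<in> space walk_space - ?E \<longrightarrow> \<omega> \<in> ?T"
        using conv
      proof eventually_elim
        case (elim \<omega>)
        show ?case
        proof
          assume "\<omega> \<in> space walk_space - ?E"
          then have inb: "\<forall>n. ball_walk D \<epsilon> x0 \<omega> n \<in> cball y0 (\<delta> / 2)" by (auto simp: esc_def intro: less_imp_le)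
          from elim have "(\<lambda>n. ball_walk D \<epsilon> x0 \<omega> n) \<longlonglongrightarrow> lim (\<lambda>n. ball_walk D \<epsilon> x0 \<omega> n)"
            by (simp add: convergent_LIMSEQ_iff)
          then have "lim (\<lambda>n. ball_walk D \<epsilon> x0 \<omega> n) \<in> cball y0 (\<delta> / 2)"
            by (rule Lim_in_closed_set[rotated 3]) (use inb in auto)
          then have "walk_limit D \<epsilon> x0 \<omega> \<in> ball y0 \<delta>"
            using \<delta> by (simp add: walk_limit_def eta_contract_eq)
          then show "\<omega> \<in> ?T" by simp
        qed
      qed
      then have "emeasure walk_space (space walk_space - ?E) \<le> emeasure walk_space ?T"
        by (intro emeasure_mono_AE Tsets) auto
      then have "measure walk_space (space walk_space - ?E) \<le> measure walk_space ?T"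
        by (simp add: P.emeasure_eq_measure)
      moreover have "measure walk_space (space walk_space - ?E) = 1 - measure walk_space ?E"
        by (rule P.prob_compl) simp
      ultimately show "1 - \<eta> \<le> measure walk_space ?T" using mE by linarith
    qed
    then show "\<exists>\<delta>h\<in>{0<..<\<delta>}. \<exists>\<epsilon>h\<in>{0<..<1::real}. \<forall>\<epsilon>\<in>{0<..<\<epsilon>h}. \<forall>x0\<in>ball y0 \<delta>h \<inter> D.
        1 - \<eta> \<le> measure walk_space {\<omega> \<in> space walk_space. walk_limit D \<epsilon> x0 \<omega> \<in> ball y0 \<delta>}"
      using r e by (intro bexI[of _ r] bexI[of _ e]) auto
  qed
qed

end
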